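(* Let $d\geqslant 2$. Every $(d-1)$-neighborly family $F\subseteq S^d$ of maximum possible size is a partition, i.e., $\sum_{x\in F}2^{j(x)}=2^d$, where $j(x)$ is the number of jokers in $x$.
   Context: Let $S=\{0,1,\ast\}$ and let $S^d$ be the set of strings of length $d$ over $S$; the symbol $\ast$ is called a joker, and $j(x)$ denotes the number of jokers in $x\in S^d$. For $x,y\in S^d$, $d(x,y)$ is the number of positions $i\in[d]$ such that one of $x_i,y_i$ equals $0$ and the other equals $1$. A family $F\subseteq S^d$ is $k$-neighborly if $1\leqslant d(x,y)\leqslant k$ for all distinct $x,y\in F$. A $k$-neighborly family $F$ is called a partition if $\sum_{x\in F}2^{j(x)}=2^d$. "Maximum possible size" means that no $(d-1)$-neighborly family in $S^d$ has more elements. *)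

theory Defs
  imports Main
begin

datatype sym = Zero | One | Joker

definition words :: "nat \<Rightarrow> sym list set" where
  "words d = {x. length x = d}"

definition jokers :: "sym list \<Rightarrow> nat" where
  "jokers x = length (filter (\<lambda>s. s = Joker) x)"

definition dist :: "sym list \<Rightarrow> sym list \<Rightarrow> nat" where
  "dist x y = card {i. i < length x \<and> i < length y \<and>
      ((x ! i = Zero \<and> y ! i = One) \<or> (x ! i = One \<and> y ! i = Zero))}"

definition neighborly :: "nat \<Rightarrow> nat \<Rightarrow> sym list set \<Rightarrow> bool" where
  "neighborly d k F \<longleftrightarrow> F \<subseteq> words d \<and>
     (\<forall>x\<in>F. \<forall>y\<in>F. x \<noteq> y \<longrightarrow> 1 \<le> dist x y \<and> dist x y \<le> k)"

definition is_partition :: "nat \<Rightarrow> sym list set \<Rightarrow> bool" where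
  "is_partition d F \<longleftrightarrow> (\<Sum>x\<in>F. (2::nat) ^ jokers x) = 2 ^ d"

end

theory Submission
  imports Defs
begin

definition cov :: "sym list \<Rightarrow> sym list set" where
  "cov x = {v. length v = length x \<and> (\<forall>i<length x. v!i \<noteq> Joker \<and> (x!i \<noteq> Joker \<longrightarrow> v!i = x!i))}"

abbreviation B :: "nat \<Rightarrow> sym list set" where
  "B n \<equiv> cov (replicate n Joker)"

lemma cov_Nil: "cov [] = {[]}"
  by (auto simp: cov_def)

lemma cov_Cons_Nil: "[] \<notin> cov (a#x)"
  by (auto simp: cov_def)

lemma cov_Cons_Cons: "(b#w) \<in> cov (a#x) \<longleftrightarrow> b \<noteq> Joker \<and> (a\<noteq>Joker \<longrightarrow> b=a) \<and> w \<in> cov x"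
  by (auto simp: cov_def All_less_Suc2)

lemma cov_Zero: "cov (Zero#x) = Cons Zero ` cov x"
  apply (rule set_eqI)
  subgoal for v by (cases v) (auto simp: cov_Cons_Nil cov_Cons_Cons)
  done

lemma cov_One: "cov (One#x) = Cons One ` cov x"
  apply (rule set_eqI)
  subgoal for v by (cases v) (auto simp: cov_Cons_Nil cov_Cons_Cons)
  done

lemma cov_Joker: "cov (Joker#x) = Cons Zero ` cov x \<union> Cons One ` cov x"
  apply (rule set_eqI)
  subgoal for v by (cases v; cases "hd v") (auto simp: cov_Cons_Nil cov_Cons_Cons)
  done

lemma card_cov: "card (cov x) = 2 ^ jokers x"
proof (induction x)
  case Nil
  then show ?case by (simp add: cov_Nil jokers_def)
next
  case (Cons a x)
  have fin: "finite (cov x)" using Cons by (intro card_ge_0_finite) simp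
  show ?case
  proof (cases a)
    case Zero
    then show ?thesis using Cons by (simp add: cov_Zero card_image jokers_def)
  next
    case One
    then show ?thesis using Cons by (simp add: cov_One card_image jokers_def)
  next
    case Joker
    have "card (cov (a#x)) = card (Cons Zero ` cov x) + card (Cons One ` cov x)"
      unfolding Joker cov_Joker using fin by (intro card_Un_disjoint) auto
    also have "\<dots> = 2 * 2 ^ jokers x" using Cons by (simp add: card_image)
    finally show ?thesis using Joker by (simp add: jokers_def)
  qed
qed

lemma finite_cov: "finite (cov x)"
  using card_cov[of x] by (intro card_ge_0_finite) simp

lemma card_B: "card (B n) = 2 ^ n"
  by (simp add: card_cov jokers_def)

lemma B_iff: "v \<in> B n \<longleftrightarrow> length v = n \<and> (\<forall>i<n. v!i \<noteq> Joker)"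
  by (auto simp: cov_def)

lemma cov_sub_B: "cov x \<subseteq> B (length x)"
  by (auto simp: cov_def)

definition conf :: "sym list \<Rightarrow> sym list \<Rightarrow> nat \<Rightarrow> bool" where
  "conf x y i \<longleftrightarrow> (x ! i = Zero \<and> y ! i = One) \<or> (x ! i = One \<and> y ! i = Zero)"

lemma dist_conf: "dist x y = card {i. i < length x \<and> i < length y \<and> conf x y i}"
  by (simp add: dist_def conf_def)

lemma dist_ge1: "i < length x \<Longrightarrow> i < length y \<Longrightarrow> conf x y i \<Longrightarrow> 1 \<le> dist x y"
  unfolding dist_conf
  by (metis (mono_tags, lifting) One_nat_def Suc_leI card_gt_0_iff empty_iff finite_nat_set_iff_bounded mem_Collect_eq)

lemma dist_ge1_ex: "1 \<le> dist x y \<Longrightarrow> \<exists>i. i < length x \<and> i < length y \<and> conf x y i"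
  unfolding dist_conf by (metis (mono_tags, lifting) Collect_empty_eq card.empty not_one_le_zero)

lemma dist_le: "length x = d \<Longrightarrow> i < d \<Longrightarrow> \<not> conf x y i \<Longrightarrow> dist x y \<le> d - 1"
proof -
  assume a: "length x = d" "i < d" "\<not> conf x y i"
  have "{j. j < length x \<and> j < length y \<and> conf x y j} \<subseteq> {..<d} - {i}" using a by auto
  then have "card {j. j < length x \<and> j < length y \<and> conf x y j} \<le> card ({..<d} - {i})"
    by (intro card_mono) auto
  then show ?thesis using a by (simp add: dist_conf)
qed

lemma cov_disj: "1 \<le> dist x y \<Longrightarrow> cov x \<inter> cov y = {}"
proof (rule ccontr)
  assume "1 \<le> dist x y" "cov x \<inter> cov y \<noteq> {}"
  then obtain i v where "i < length x" "i < length y" "conf x y i" "v \<in> cov x" "v \<in> cov y"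
    using dist_ge1_ex by blast
  then show False by (auto simp: cov_def conf_def)
qed


lemma finite_words: "finite (words d)"
proof -
  have "words d \<subseteq> {xs. set xs \<subseteq> UNIV \<and> length xs = d}" by (auto simp: words_def)
  moreover have "finite (UNIV :: sym set)"
  proof -
    have "(UNIV :: sym set) = {Zero, One, Joker}" using sym.exhaust by blast
    then show ?thesis by (metis finite.emptyI finite_insert)
  qed
  ultimately show ?thesis using finite_lists_length_eq finite_subset by blast
qed

fun flip :: "sym \<Rightarrow> sym" where
  "flip Zero = One" | "flip One = Zero" | "flip Joker = Joker"

lemma flip_inj: "inj (map flip)"
proof (rule injI)
  fix x y :: "sym list" assume "map flip x = map flip y"
  then show "x = y"
  proof (induction x arbitrary: y)
    case Nil then show ?case by simp
  next
    case (Cons a x)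
    then obtain b y' where "y = b # y'" by (cases y) auto
    with Cons show ?case by (cases a; cases b) auto
  qed
qed

lemma jokers0: "jokers x = 0 \<longleftrightarrow> (\<forall>i<length x. x!i \<noteq> Joker)"
  by (auto simp: jokers_def filter_empty_conv in_set_conv_nth)

lemma dist_flip: assumes "jokers x = 0" shows "dist x (map flip x) = length x"
proof -
  have "{i. i < length x \<and> i < length (map flip x) \<and> conf x (map flip x) i} = {..<length x}"
  proof -
    have h: "\<And>s. s \<noteq> Joker \<Longrightarrow> (s = Zero \<and> flip s = One) \<or> (s = One \<and> flip s = Zero)"
      subgoal for s by (cases s) auto
      done
    have j: "\<forall>i<length x. x!i \<noteq> Joker" using assms jokers0 by blast
    show ?thesis
    proof (rule set_eqI)
      fix i
      show "i \<in> {i. i < length x \<and> i < length (map flip x) \<and> conf x (map flip x) i} \<longleftrightarrow> i \<in> {..<length x}"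
      proof (cases "i < length x")
        case True
        then have "x!i \<noteq> Joker" using j by blast
        then have "conf x (map flip x) i" unfolding conf_def nth_map[OF True] using h by blast
        then show ?thesis using True by simp
      qed simp
    qed
  qed
  then show ?thesis by (simp add: dist_conf)
qed

lemma points_bound:
  assumes d: "d \<ge> 2" and nb: "neighborly d (d - 1) F"
  shows "2 * card {x\<in>F. jokers x = 0} \<le> 2 ^ d"
proof -
  define P where "P = {x\<in>F. jokers x = 0}"
  have PB: "P \<subseteq> B d"
  proof
    fix x assume "x \<in> P"
    then have "length x = d" "\<forall>i<length x. x!i \<noteq> Joker" using nb jokers0 unfolding P_def neighborly_def words_def by auto
    then show "x \<in> B d" unfolding B_iff by simp
  qed
  have fP: "finite P" using finite_subset[OF PB finite_cov] .
  have QB: "map flip ` P \<subseteq> B d"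
  proof
    fix v assume "v \<in> map flip ` P"
    then obtain x where x: "x \<in> P" "v = map flip x" by auto
    have fj: "\<And>s. s \<noteq> Joker \<Longrightarrow> flip s \<noteq> Joker"
      subgoal for s by (cases s) auto
      done
    have "length x = d" "\<forall>i<d. x!i \<noteq> Joker" using x PB B_iff by blast+
    then show "v \<in> B d" unfolding B_iff x(2) using fj by simp
  qed
  have disj: "P \<inter> map flip ` P = {}"
  proof (rule ccontr)
    assume "P \<inter> map flip ` P \<noteq> {}"
    then obtain x where x: "x \<in> P" "map flip x \<in> P" by auto
    have lx: "length x = d" using x PB B_iff by auto
    have "dist x (map flip x) = d" using x dist_flip lx unfolding P_def by auto
    moreover have "x \<noteq> map flip x"
    proof
      assume "x = map flip x"
      have "0 < length x" using lx d by simp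
      then have "x!0 = flip (x!0)" using \<open>x = map flip x\<close> by (metis nth_map)
      moreover have "x!0 \<noteq> Joker" using PB x(1) B_iff \<open>0 < length x\<close> lx by blast
      ultimately show False by (cases "x!0") auto
    qed
    ultimately show False using nb x d unfolding neighborly_def P_def by force
  qed
  have "card P + card (map flip ` P) = card (P \<union> map flip ` P)"
    using fP disj by (simp add: card_Un_disjoint)
  also have "\<dots> \<le> card (B d)" using PB QB finite_cov by (intro card_mono) auto
  moreover have "card (map flip ` P) = card P"
    using card_image[OF inj_on_subset[OF flip_inj subset_UNIV]] .
  ultimately have "card P + card P \<le> 2 ^ d"
    using card_B by simp
  then show ?thesis unfolding P_def by simp
qed

lemma volume_bound:
  assumes nb: "neighborly d k F"
  shows "(\<Sum>x\<in>F. (2::nat) ^ jokers x) \<le> 2 ^ d"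
proof -
  have fF: "finite F" using nb finite_words finite_subset unfolding neighborly_def by blast
  have "(\<Sum>x\<in>F. (2::nat) ^ jokers x) = (\<Sum>x\<in>F. card (cov x))" by (simp add: card_cov)
  also have "\<dots> = card (\<Union>x\<in>F. cov x)"
    using fF nb finite_cov cov_disj unfolding neighborly_def
    by (intro card_UN_disjoint[symmetric]) auto
  also have "\<dots> \<le> card (B d)"
    using nb cov_sub_B finite_cov unfolding neighborly_def words_def
    by (intro card_mono) fastforce+
  finally show ?thesis by (simp add: card_B)
qed


lemma B_diff: "w \<in> B n \<Longrightarrow> w' \<in> B n \<Longrightarrow> w \<noteq> w' \<Longrightarrow> \<exists>i<n. conf w w' i"
proof -
  assume a: "w \<in> B n" "w' \<in> B n" "w \<noteq> w'"
  then have l: "length w = n" "length w' = n" and j: "\<forall>i<n. w!i \<noteq> Joker" "\<forall>i<n. w'!i \<noteq> Joker"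
    using B_iff by auto
  obtain i where i: "i < n" "w!i \<noteq> w'!i" using a(3) l nth_equalityI by metis
  have "conf w w' i" using i j unfolding conf_def by (cases "w!i"; cases "w'!i") auto
  then show ?thesis using i by blast
qed

lemma conf_Suc: "conf (a#w) (b#w') (Suc i) = conf w w' i"
  by (simp add: conf_def)

definition G :: "nat \<Rightarrow> sym list set" where
  "G m = Cons Zero ` B (Suc m) \<union> (\<lambda>w. One # Joker # w) ` B m"

lemma card_G: "card (G m) = 2 ^ Suc m + 2 ^ m"
proof -
  have "card (G m) = card (Cons Zero ` B (Suc m)) + card ((\<lambda>w. One # Joker # w) ` B m)"
    unfolding G_def using finite_cov by (intro card_Un_disjoint) auto
  also have "\<dots> = 2 ^ Suc m + 2 ^ m"
    by (simp add: card_image inj_on_def card_B del: replicate.simps)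
  finally show ?thesis .
qed

lemma G_nb: "neighborly (Suc (Suc m)) (Suc (Suc m) - 1) (G m)"
  unfolding neighborly_def
proof (intro conjI ballI impI)
  show "G m \<subseteq> words (Suc (Suc m))"
    unfolding G_def words_def by (auto simp: B_iff simp del: replicate.simps)
next
  fix x y assume xy: "x \<in> G m" "y \<in> G m" "x \<noteq> y"
  have lx: "length x = Suc (Suc m)" and ly: "length y = Suc (Suc m)"
    using xy unfolding G_def by (auto simp: B_iff simp del: replicate.simps)
  have "(\<exists>i<Suc (Suc m). conf x y i) \<and> (\<exists>i<Suc (Suc m). \<not> conf x y i)"
  proof -
    {
      fix w w' assume w: "w \<in> B (Suc m)" "w' \<in> B (Suc m)" "x = Zero # w" "y = Zero # w'"
      then obtain i where "i < Suc m" "conf w w' i" using B_diff xy(3) by blast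
      then have ?thesis using w conf_Suc[of Zero w Zero w' i]
        by (intro conjI exI[of _ "Suc i"] exI[of _ 0]) (auto simp: conf_def)
    }
    moreover
    {
      fix w w' assume w: "w \<in> B m" "w' \<in> B m" "x = One # Joker # w" "y = One # Joker # w'"
      then obtain i where "i < m" "conf w w' i" using B_diff xy(3) by blast
      then have ?thesis using w
        by (intro conjI exI[of _ "Suc (Suc i)"] exI[of _ 0]) (auto simp: conf_def)
    }
    moreover
    {
      fix w w' assume w: "x = Zero # w" "y = One # Joker # w'"
      then have ?thesis
        by (intro conjI exI[of _ "0"] exI[of _ 1]) (auto simp: conf_def)
    }
    moreover
    {
      fix w w' assume w: "y = Zero # w" "x = One # Joker # w'"
      then have ?thesis
        by (intro conjI exI[of _ "0"] exI[of _ 1]) (auto simp: conf_def)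
    }
    ultimately show ?thesis using xy(1,2) unfolding G_def by blast
  qed
  then obtain i i' where "i < Suc (Suc m)" "conf x y i" "i' < Suc (Suc m)" "\<not> conf x y i'" by blast
  then show "1 \<le> dist x y" "dist x y \<le> Suc (Suc m) - 1"
    using dist_ge1 dist_le lx ly by metis+
qed

theorem proposition3:
  fixes d :: nat and F :: "sym list set"
  assumes "d \<ge> 2"
    and "neighborly d (d - 1) F"
    and "\<forall>G. neighborly d (d - 1) G \<longrightarrow> card G \<le> card F"
  shows "is_partition d F"
proof (rule ccontr)
  assume np: "\<not> is_partition d F"
  obtain m where dm: "d = Suc (Suc m)" using assms(1) by (metis add_2_eq_Suc le_Suc_ex)
  have fF: "finite F" using assms(2) finite_words finite_subset unfolding neighborly_def by blast
  define V where "V = (\<Sum>x\<in>F. (2::nat) ^ jokers x)"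
  define P where "P = {x\<in>F. jokers x = 0}"
  have cP: "card P = (\<Sum>x\<in>F. if jokers x = 0 then 1 else 0)"
    unfolding P_def using sum.inter_filter[OF fF, of "\<lambda>_. 1::nat" "\<lambda>x. jokers x = 0"] by simp
  have "2 * card F = (\<Sum>x\<in>F. (2::nat))" by simp
  also have "\<dots> \<le> (\<Sum>x\<in>F. (if jokers x = 0 then 1 else 0) + 2 ^ jokers x)"
  proof (rule sum_mono)
    fix x show "(2::nat) \<le> (if jokers x = 0 then 1 else 0) + 2 ^ jokers x"
      by (cases "jokers x") auto
  qed
  also have "\<dots> = card P + V" unfolding cP V_def by (simp add: sum.distrib)
  finally have h1: "2 * card F \<le> card P + V" .
  have h2: "2 * card P \<le> 2 ^ d" unfolding P_def using points_bound assms(1,2) by blast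
  have h3: "V < 2 ^ d" using volume_bound[OF assms(2)] np unfolding V_def is_partition_def by simp
  have h4: "card (G m) \<le> card F" using assms(3) G_nb[of m] dm by simp
  have "(2::nat) ^ d = 4 * 2 ^ m" unfolding dm by simp
  then show False using h1 h2 h3 h4 card_G[of m] by simp
qed

end
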